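(* A real symmetric $n\times n$ matrix $A$ is symmetrically tropically singular if and only if there are two cycle-distinct permutations $\sigma,\tau\in S_n$ that both realize the tropical determinant of $A$.
   Context: For a real $n\times n$ matrix $A$, its tropical determinant is $\min_{\sigma\in S_n}\sum_{i=1}^n A_{i,\sigma(i)}$, and $\sigma$ realizes it if $\sum_i A_{i,\sigma(i)}$ equals this minimum. Two permutations are cycle-similar if their disjoint cycle decompositions agree up to replacing some cycles by their inverses; otherwise they are cycle-distinct. A real symmetric $n\times n$ matrix $A$ is symmetrically tropically singular if, among the monomials $\prod_{i}X_{i,\sigma(i)}$ ($\sigma\in S_n$) in commuting variables subject to the identification $X_{i,j}=X_{j,i}$, with value $\sum_i A_{i,\sigma(i)}$, the minimum value is attained by at least two distinct monomials (distinct after the identification). *)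

theory Defs
  imports "HOL-Analysis.Analysis" "HOL-Library.Multiset" "HOL-Combinatorics.Permutations"
begin

text \<open>Matrices are indexed by a finite type 'n (so n = CARD('n)); permutations of S_n
  are the functions \<sigma> with \<sigma> permutes UNIV.\<close>

definition perm_weight :: "real^'n::finite^'n \<Rightarrow> ('n \<Rightarrow> 'n) \<Rightarrow> real" where
  "perm_weight A \<sigma> = (\<Sum>i\<in>UNIV. A $ i $ \<sigma> i)"

definition trop_det :: "real^'n::finite^'n \<Rightarrow> real" where
  "trop_det A = Min {perm_weight A \<sigma> | \<sigma>. \<sigma> permutes (UNIV :: 'n set)}"

definition realizes_trop_det :: "real^'n::finite^'n \<Rightarrow> ('n \<Rightarrow> 'n) \<Rightarrow> bool" where
  "realizes_trop_det A \<sigma> \<longleftrightarrow> \<sigma> permutes UNIV \<and> perm_weight A \<sigma> = trop_det A"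

definition perm_orbit :: "('n \<Rightarrow> 'n) \<Rightarrow> 'n \<Rightarrow> 'n set" where
  "perm_orbit \<sigma> x = {(\<sigma> ^^ k) x | k. True}"

definition cycle_at :: "('n \<Rightarrow> 'n) \<Rightarrow> 'n \<Rightarrow> ('n \<Rightarrow> 'n)" where
  "cycle_at \<sigma> x = (\<lambda>y. if y \<in> perm_orbit \<sigma> x then \<sigma> y else y)"

text \<open>Cycle-similar: every cycle of \<tau> is a cycle of \<sigma> or the inverse of one, namely the
  cycle of \<sigma> through the same point (so the cycle decompositions agree up to inverting
  some cycles).\<close>
definition cycle_similar :: "('n \<Rightarrow> 'n) \<Rightarrow> ('n \<Rightarrow> 'n) \<Rightarrow> bool" where
  "cycle_similar \<sigma> \<tau> \<longleftrightarrow>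
     (\<forall>x. cycle_at \<tau> x = cycle_at \<sigma> x \<or> cycle_at \<tau> x = inv (cycle_at \<sigma> x))"

text \<open>The monomial prod_i X_{i,\<sigma> i} with X_{ij} = X_{ji} identified: a multiset of unordered
  pairs {i, \<sigma> i}.\<close>
definition sym_monomial :: "('n::finite \<Rightarrow> 'n) \<Rightarrow> 'n set multiset" where
  "sym_monomial \<sigma> = image_mset (\<lambda>i. {i, \<sigma> i}) (mset_set UNIV)"

text \<open>The value of a monomial is well defined for symmetric A and equals perm_weight A \<sigma>;
  the minimum value is trop_det A. Singular: at least two distinct monomials attain it.\<close>
definition sym_trop_singular :: "real^'n::finite^'n \<Rightarrow> bool" where
  "sym_trop_singular A \<longleftrightarrow>
     card {sym_monomial \<sigma> | \<sigma>. \<sigma> permutes UNIV \<and> perm_weight A \<sigma> = trop_det A} \<ge> 2"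

end

theory Submission
  imports Defs "HOL-Combinatorics.Orbits"
begin
lemma perm_of: "(\<sigma>::'n::finite\<Rightarrow>'n) permutes UNIV \<Longrightarrow> permutation \<sigma>"
  by (rule permutation_permutes[THEN iffD2]) (rule exI[of _ UNIV], simp)

lemma po_eq: "(\<sigma>::'n::finite\<Rightarrow>'n) permutes UNIV \<Longrightarrow> perm_orbit \<sigma> x = orbit \<sigma> x"
  unfolding perm_orbit_def using orbit_altdef_permutation[OF perm_of] by metis

lemma orbit_inv_closed: "permutation \<sigma> \<Longrightarrow> y \<in> orbit \<sigma> x \<Longrightarrow> inv \<sigma> y \<in> orbit \<sigma> x"
proof -
  assume a: "permutation \<sigma>" "y \<in> orbit \<sigma> x"
  then have "y \<in> orbit (inv \<sigma>) x" by (simp add: orbit_inv_eq)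
  then have "inv \<sigma> y \<in> orbit (inv \<sigma>) x" by (rule orbit.step)
  then show ?thesis using a by (simp add: orbit_inv_eq)
qed
lemma cyc_facts:
  assumes p: "(\<sigma>::'n::finite\<Rightarrow>'n) permutes UNIV"
  shows "inv (cycle_at \<sigma> x) = cycle_at (inv \<sigma>) x" "bij (cycle_at \<sigma> x)"
proof -
  have pi: "inv \<sigma> permutes UNIV" using p by (simp add: permutes_inv)
  have P: "permutation \<sigma>" using p perm_of by blast
  have o: "perm_orbit (inv \<sigma>) x = orbit \<sigma> x" "perm_orbit \<sigma> x = orbit \<sigma> x"
    using po_eq[OF pi] po_eq[OF p] orbit_inv_eq[OF P] by auto
  have a: "\<And>y. \<sigma> (inv \<sigma> y) = y" "\<And>y. inv \<sigma> (\<sigma> y) = y"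
    using p by (auto simp: permutes_inverses)
  have c: "\<And>y. y \<in> orbit \<sigma> x \<Longrightarrow> \<sigma> y \<in> orbit \<sigma> x" by (rule orbit.step)
  have d: "\<And>y. y \<in> orbit \<sigma> x \<Longrightarrow> inv \<sigma> y \<in> orbit \<sigma> x" using orbit_inv_closed[OF P] .
  have e1: "\<And>y. cycle_at (inv \<sigma>) x (cycle_at \<sigma> x y) = y"
    unfolding cycle_at_def o by (auto simp: a c d)
  have e2: "\<And>y. cycle_at \<sigma> x (cycle_at (inv \<sigma>) x y) = y"
    unfolding cycle_at_def o by (auto simp: a c d)
  show "inv (cycle_at \<sigma> x) = cycle_at (inv \<sigma>) x" using e1 e2 by (rule inv_equality)
  show "bij (cycle_at \<sigma> x)" using e1 e2 by (metis bijI' )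
qed

lemma cyc_self: "cycle_at \<sigma> x x = \<sigma> x"
proof -
  have "x \<in> perm_orbit \<sigma> x" unfolding perm_orbit_def by (rule CollectI, rule exI[of _ 0], simp)
  then show ?thesis unfolding cycle_at_def by simp
qed

lemma cyc_inv_self:
  assumes p: "(\<sigma>::'n::finite\<Rightarrow>'n) permutes UNIV"
  shows "inv (cycle_at \<sigma> x) x = inv \<sigma> x"
  using cyc_facts(1)[OF p] cyc_self by metis

definition nbr where "nbr \<sigma> \<tau> \<longleftrightarrow> (\<forall>x. {\<sigma> x, inv \<sigma> x} = {\<tau> x, inv \<tau> x})"

lemma sim_nbr:
  assumes p: "(\<sigma>::'n::finite\<Rightarrow>'n) permutes UNIV" and q: "\<tau> permutes UNIV"
    and s: "cycle_similar \<sigma> \<tau>"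
  shows "nbr \<sigma> \<tau>"
  unfolding nbr_def
proof
  fix x
  have g: "cycle_at \<tau> x x = \<tau> x" "inv (cycle_at \<tau> x) x = inv \<tau> x"
    using cyc_self cyc_inv_self[OF q] by auto
  have f: "cycle_at \<sigma> x x = \<sigma> x" "inv (cycle_at \<sigma> x) x = inv \<sigma> x"
    using cyc_self cyc_inv_self[OF p] by auto
  from s consider "cycle_at \<tau> x = cycle_at \<sigma> x" | "cycle_at \<tau> x = inv (cycle_at \<sigma> x)"
    unfolding cycle_similar_def by blast
  then show "{\<sigma> x, inv \<sigma> x} = {\<tau> x, inv \<tau> x}"
  proof cases
    case 1 then show ?thesis using f g by metis
  next
    case 2
    then have "inv (cycle_at \<tau> x) = cycle_at \<sigma> x" using cyc_facts(2)[OF p] inv_inv_eq by metis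
    then show ?thesis using f g 2 by (metis insert_commute)
  qed
qed

lemma nbr_step:
  assumes p: "(\<sigma>::'n::finite\<Rightarrow>'n) permutes UNIV" and q: "\<tau> permutes UNIV"
    and n: "nbr \<sigma> \<tau>" and h: "\<tau> x = \<sigma> x"
  shows "(\<tau> ^^ k) x = (\<sigma> ^^ k) x \<and> (\<tau> ^^ Suc k) x = (\<sigma> ^^ Suc k) x"
proof (induction k)
  case 0 then show ?case using h by simp
next
  case (Suc k)
  define y where "y = (\<sigma> ^^ k) x"
  define z where "z = (\<sigma> ^^ Suc k) x"
  have zy: "z = \<sigma> y" "z = \<tau> ((\<tau> ^^ k) x)" using Suc y_def z_def by auto
  have iy: "inv \<sigma> z = y" "inv \<tau> z = y" using zy p q Suc y_def
    by (metis permutes_inverses(2))+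
  have "{\<sigma> z, y} = {\<tau> z, y}" using n iy unfolding nbr_def by metis
  then have "\<sigma> z = \<tau> z" by (metis doubleton_eq_iff)
  moreover have tz: "(\<tau> ^^ Suc k) x = z" using Suc.IH z_def by blast
  then have "(\<tau> ^^ Suc (Suc k)) x = \<tau> z" by (metis funpow.simps(2) o_apply)
  moreover have "(\<sigma> ^^ Suc (Suc k)) x = \<sigma> z" using z_def by simp
  ultimately show ?case using tz z_def by metis
qed

lemma nbr_sim:
  assumes p: "(\<sigma>::'n::finite\<Rightarrow>'n) permutes UNIV" and q: "\<tau> permutes UNIV"
    and n: "nbr \<sigma> \<tau>"
  shows "cycle_similar \<sigma> \<tau>"
  unfolding cycle_similar_def
proof
  fix x
  have key: "cycle_at \<tau> x = cycle_at \<rho> x"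
    if r: "\<rho> permutes UNIV" "nbr \<rho> \<tau>" "\<tau> x = \<rho> x" for \<rho>
  proof -
    have k: "\<And>k. (\<tau> ^^ k) x = (\<rho> ^^ k) x" using nbr_step[OF r(1) q r(2) r(3)] by blast
    have o: "perm_orbit \<tau> x = perm_orbit \<rho> x" unfolding perm_orbit_def using k by auto
    have "\<And>y. y \<in> perm_orbit \<rho> x \<Longrightarrow> \<tau> y = \<rho> y"
    proof -
      fix y assume "y \<in> perm_orbit \<rho> x"
      then obtain k where "y = (\<rho> ^^ k) x" unfolding perm_orbit_def by auto
      then show "\<tau> y = \<rho> y" using k[of "Suc k"] k[of k] by simp
    qed
    then show ?thesis unfolding cycle_at_def o by auto
  qed
  have pi: "inv \<sigma> permutes UNIV" using p by (simp add: permutes_inv)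
  show "cycle_at \<tau> x = cycle_at \<sigma> x \<or> cycle_at \<tau> x = inv (cycle_at \<sigma> x)"
  proof (cases "\<tau> x = \<sigma> x")
    case True then show ?thesis using key[OF p n] by simp
  next
    case False
    have "\<tau> x \<in> {\<sigma> x, inv \<sigma> x}" using n unfolding nbr_def by blast
    then have "\<tau> x = inv \<sigma> x" using False by blast
    moreover have "nbr (inv \<sigma>) \<tau>" using n p unfolding nbr_def
      by (metis insert_commute inv_inv_eq permutes_bij)
    ultimately have "cycle_at \<tau> x = cycle_at (inv \<sigma>) x" using key[OF pi] by simp
    then show ?thesis using cyc_facts(1)[OF p] by simp
  qed
qed


lemma in_range_iff:
  assumes p: "(\<sigma>::'n::finite\<Rightarrow>'n) permutes UNIV"
  shows "{x, b} \<in> range (\<lambda>i. {i, \<sigma> i}) \<longleftrightarrow> b \<in> {\<sigma> x, inv \<sigma> x}"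
proof -
  have a: "\<And>y. \<sigma> (inv \<sigma> y) = y" "\<And>y. inv \<sigma> (\<sigma> y) = y"
    using p by (auto simp: permutes_inverses)
  have "{x, b} \<in> range (\<lambda>i. {i, \<sigma> i}) \<longleftrightarrow> (\<exists>i. {x,b} = {i, \<sigma> i})" by auto
  also have "\<dots> \<longleftrightarrow> (\<exists>i. (x = i \<and> b = \<sigma> i) \<or> (x = \<sigma> i \<and> b = i))"
    by (simp add: doubleton_eq_iff)
  also have "\<dots> \<longleftrightarrow> (b = \<sigma> x \<or> x = \<sigma> b)" by blast
  also have "(x = \<sigma> b) \<longleftrightarrow> (b = inv \<sigma> x)" using a by metis
  finally show ?thesis by simp
qed

lemma mono_nbr:
  assumes p: "(\<sigma>::'n::finite\<Rightarrow>'n) permutes UNIV" and q: "\<tau> permutes UNIV"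
    and e: "sym_monomial \<sigma> = sym_monomial \<tau>"
  shows "nbr \<sigma> \<tau>"
proof -
  have "set_mset (sym_monomial \<sigma>) = set_mset (sym_monomial \<tau>)" using e by simp
  then have r: "range (\<lambda>i. {i, \<sigma> i}) = range (\<lambda>i. {i, \<tau> i})"
    unfolding sym_monomial_def by simp
  show ?thesis unfolding nbr_def
  proof
    fix x
    show "{\<sigma> x, inv \<sigma> x} = {\<tau> x, inv \<tau> x}"
    proof (rule set_eqI)
      fix b
      show "b \<in> {\<sigma> x, inv \<sigma> x} \<longleftrightarrow> b \<in> {\<tau> x, inv \<tau> x}"
        using in_range_iff[OF p, of x b] in_range_iff[OF q, of x b] r by simp
    qed
  qed
qed

lemma nbr_mono:
  assumes p: "(\<sigma>::'n::finite\<Rightarrow>'n) permutes UNIV" and q: "\<tau> permutes UNIV"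
    and n: "nbr \<sigma> \<tau>"
  shows "sym_monomial \<sigma> = sym_monomial \<tau>"
proof -
  have a: "\<And>y. \<sigma> (inv \<sigma> y) = y" "\<And>y. inv \<sigma> (\<sigma> y) = y"
    using p by (auto simp: permutes_inverses)
  have b: "\<And>y. \<tau> (inv \<tau> y) = y" "\<And>y. inv \<tau> (\<tau> y) = y"
    using q by (auto simp: permutes_inverses)
  have nx: "\<And>x. {\<sigma> x, inv \<sigma> x} = {\<tau> x, inv \<tau> x}" using n unfolding nbr_def by blast
  define \<pi> where "\<pi> i = (if \<tau> i = \<sigma> i then i else \<sigma> i)" for i
  have c: "\<tau> i \<noteq> \<sigma> i \<Longrightarrow> \<tau> i = inv \<sigma> i \<and> inv \<tau> i = \<sigma> i" for i
    using nx[of i] by (metis doubleton_eq_iff)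
  have eq: "{\<pi> i, \<tau> (\<pi> i)} = {i, \<sigma> i}" for i
  proof (cases "\<tau> i = \<sigma> i")
    case True then show ?thesis by (simp add: \<pi>_def)
  next
    case False
    then have "\<tau> (\<sigma> i) = i" using c[of i] b by metis
    then show ?thesis using False by (simp add: \<pi>_def insert_commute)
  qed
  have fixd: False if h1: "\<tau> j \<noteq> \<sigma> j" "\<tau> (\<sigma> j) = \<sigma> (\<sigma> j)" for j
  proof -
    have cj: "\<tau> j = inv \<sigma> j" "inv \<tau> j = \<sigma> j" using c[OF h1(1)] by auto
    have "\<tau> (\<sigma> j) = j" using cj(2) b(1) by metis
    then have "\<sigma> (\<sigma> j) = j" using h1(2) by simp
    then have "inv \<sigma> j = \<sigma> j" using a(2) by metis
    then show False using cj(1) h1(1) by simp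
  qed
  have inj: "inj \<pi>"
  proof (rule injI)
    fix i j assume h: "\<pi> i = \<pi> j"
    show "i = j"
    proof (cases "\<tau> i = \<sigma> i"; cases "\<tau> j = \<sigma> j")
      assume "\<tau> i = \<sigma> i" "\<tau> j = \<sigma> j" then show ?thesis using h by (simp add: \<pi>_def)
    next
      assume "\<tau> i \<noteq> \<sigma> i" "\<tau> j \<noteq> \<sigma> j"
      then have "\<sigma> i = \<sigma> j" using h by (simp add: \<pi>_def)
      then show ?thesis using a(2) by metis
    next
      assume h1: "\<tau> i = \<sigma> i" "\<tau> j \<noteq> \<sigma> j"
      then have "i = \<sigma> j" using h by (simp add: \<pi>_def)
      then show ?thesis using h1 fixd[of j] by simp
    next
      assume h1: "\<tau> i \<noteq> \<sigma> i" "\<tau> j = \<sigma> j"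
      then have "j = \<sigma> i" using h by (simp add: \<pi>_def)
      then show ?thesis using h1 fixd[of i] by simp
    qed
  qed
  then have s: "range \<pi> = UNIV" by (simp add: finite_UNIV_inj_surj)
  have m: "image_mset \<pi> (mset_set UNIV) = mset_set UNIV"
    using image_mset_mset_set[OF inj] s by simp
  have "sym_monomial \<tau> = image_mset (\<lambda>i. {i, \<tau> i}) (image_mset \<pi> (mset_set UNIV))"
    unfolding sym_monomial_def m ..
  also have "\<dots> = image_mset (\<lambda>i. {\<pi> i, \<tau> (\<pi> i)}) (mset_set UNIV)"
    by (simp add: multiset.map_comp comp_def)
  also have "\<dots> = sym_monomial \<sigma>" unfolding sym_monomial_def eq ..
  finally show ?thesis by simp
qed

lemma mono_iff:
  assumes p: "(\<sigma>::'n::finite\<Rightarrow>'n) permutes UNIV" and q: "\<tau> permutes UNIV"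
  shows "sym_monomial \<sigma> = sym_monomial \<tau> \<longleftrightarrow> cycle_similar \<sigma> \<tau>"
  using mono_nbr[OF p q] nbr_mono[OF p q] sim_nbr[OF p q] nbr_sim[OF p q] by blast

theorem proposition1:
  fixes A :: "real^'n::finite^'n"
  assumes "transpose A = A"
  shows "sym_trop_singular A \<longleftrightarrow>
    (\<exists>\<sigma> \<tau>. realizes_trop_det A \<sigma> \<and> realizes_trop_det A \<tau> \<and> \<not> cycle_similar \<sigma> \<tau>)"
proof -
  define S where "S = {sym_monomial \<sigma> | \<sigma>. \<sigma> permutes (UNIV::'n set) \<and> perm_weight A \<sigma> = trop_det A}"
  have fin: "finite S"
  proof -
    have "S \<subseteq> sym_monomial ` {\<sigma>. \<sigma> permutes (UNIV::'n set)}" unfolding S_def by auto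
    moreover have "finite {\<sigma>. \<sigma> permutes (UNIV::'n set)}" by (simp add: finite_permutations)
    ultimately show ?thesis using finite_subset by blast
  qed
  have c2: "card S \<ge> 2 \<longleftrightarrow> (\<exists>a\<in>S. \<exists>b\<in>S. a \<noteq> b)"
  proof
    assume h: "card S \<ge> 2"
    then obtain a where a: "a \<in> S" by fastforce
    show "\<exists>a\<in>S. \<exists>b\<in>S. a \<noteq> b"
    proof (rule ccontr)
      assume "\<not> ?thesis"
      then have "S \<subseteq> {a}" using a by blast
      then have "card S \<le> 1" using card_mono[of "{a}" S] by simp
      then show False using h by simp
    qed
  next
    assume "\<exists>a\<in>S. \<exists>b\<in>S. a \<noteq> b"
    then obtain a b where "a \<in> S" "b \<in> S" "a \<noteq> b" by blast
    then have "{a,b} \<subseteq> S" "card {a,b} = 2" by auto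
    then show "card S \<ge> 2" using card_mono[OF fin] by metis
  qed
  have "sym_trop_singular A \<longleftrightarrow> (\<exists>a\<in>S. \<exists>b\<in>S. a \<noteq> b)"
    unfolding sym_trop_singular_def S_def[symmetric] using c2 .
  also have "\<dots> \<longleftrightarrow> (\<exists>\<sigma> \<tau>. realizes_trop_det A \<sigma> \<and> realizes_trop_det A \<tau> \<and> sym_monomial \<sigma> \<noteq> sym_monomial \<tau>)"
    unfolding S_def realizes_trop_det_def by blast
  also have "\<dots> \<longleftrightarrow> (\<exists>\<sigma> \<tau>. realizes_trop_det A \<sigma> \<and> realizes_trop_det A \<tau> \<and> \<not> cycle_similar \<sigma> \<tau>)"
    using mono_iff unfolding realizes_trop_det_def by blast
  finally show ?thesis .
qed

end
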